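(* Let $\ell$ be a positive integer and $L\ge2$. For every $(p,n,\ell)$-simple-labelling $\tilde M$ of an $L$-graph, $\tilde\Delta(\tilde M)\ge0$.
   Context: An $L$-graph is a cycle with $2L$ vertices and $2L$ edges whose vertices alternate between $n$-vertices and $p$-vertices. A $(p,n,\ell)$-simple-labelling assigns an $n$-label in $[n]$ to each $n$-vertex and to each $p$-vertex either an $\ell$-tuple of elements of $[p]$ or the empty label $\emptyset$, such that: (i) $n$-labels of adjacent $n$-vertices (consecutive $n$-vertices along the cycle, separated by one $p$-vertex) are distinct; (ii) the $p$-labels in an $\ell$-tuple are distinct; (iii) for each $n$-label $i$ and $p$-label $j$, the number of edges whose $n$-endpoint is labelled $i$ and whose $p$-endpoint's tuple contains $j$ is even; (iv) for any two $n$-labels $i,i'$, the number of occurrences of three consecutive vertices labelled $i,\emptyset,i'$ equals the number of occurrences of three consecutive vertices labelled $i',\emptyset,i$. Let $\tilde k$ be the number of $p$-vertices with non-empty label, $\tilde r$ the number of distinct $n$-labels and $\tilde c$ the number of distinct $p$-labels. The excess is $\tilde\Delta(\tilde M)=\frac{L+\tilde k}2+1-\tilde r-\frac{\tilde c}{\ell}$. *)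

theory Defs
  imports Complex_Main
begin

text \<open>An L-graph: cycle a_0, b_0, a_1, b_1, ..., a_{L-1}, b_{L-1}, (back to a_0),
  where a_t (t < L) are the n-vertices and b_t (t < L) are the p-vertices.
  Edges: {a_t, b_t} and {b_t, a_{(t+1) mod L}} for t < L (2L edges).
  A labelling is given by nl :: nat => nat (n-label of a_t) and
  pl :: nat => nat list option (p-label of b_t; None is the empty label,
  Some xs an ell-tuple).\<close>

definition plab_contains :: "nat list option \<Rightarrow> nat \<Rightarrow> bool" where
  "plab_contains x j = (case x of None \<Rightarrow> False | Some xs \<Rightarrow> j \<in> set xs)"

definition simple_labelling ::
  "nat \<Rightarrow> nat \<Rightarrow> nat \<Rightarrow> nat \<Rightarrow> (nat \<Rightarrow> nat) \<Rightarrow> (nat \<Rightarrow> nat list option) \<Rightarrow> bool" where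
  "simple_labelling p n ell L nl pl \<longleftrightarrow>
     (\<forall>t<L. nl t \<in> {1..n}) \<and>
     (\<forall>t<L. case pl t of None \<Rightarrow> True
              | Some xs \<Rightarrow> length xs = ell \<and> set xs \<subseteq> {1..p}) \<and>
     \<comment> \<open>(i) adjacent n-vertices have distinct labels\<close>
     (\<forall>t<L. nl t \<noteq> nl ((t + 1) mod L)) \<and>
     \<comment> \<open>(ii) entries of a tuple are distinct\<close>
     (\<forall>t<L. case pl t of None \<Rightarrow> True | Some xs \<Rightarrow> distinct xs) \<and>
     \<comment> \<open>(iii) parity condition on edges\<close>
     (\<forall>i j. even (card {t. t < L \<and> nl t = i \<and> plab_contains (pl t) j}
                 + card {t. t < L \<and> nl ((t + 1) mod L) = i \<and> plab_contains (pl t) j})) \<and>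
     \<comment> \<open>(iv) i, empty, i' occurs as often as i', empty, i\<close>
     (\<forall>i i'. card {t. t < L \<and> nl t = i \<and> pl t = None \<and> nl ((t + 1) mod L) = i'}
           = card {t. t < L \<and> nl t = i' \<and> pl t = None \<and> nl ((t + 1) mod L) = i})"

definition k_tilde :: "nat \<Rightarrow> (nat \<Rightarrow> nat list option) \<Rightarrow> nat" where
  "k_tilde L pl = card {t. t < L \<and> pl t \<noteq> None}"

definition r_tilde :: "nat \<Rightarrow> (nat \<Rightarrow> nat) \<Rightarrow> nat" where
  "r_tilde L nl = card (nl ` {..<L})"

definition c_tilde :: "nat \<Rightarrow> (nat \<Rightarrow> nat list option) \<Rightarrow> nat" where
  "c_tilde L pl = card {j. \<exists>t<L. plab_contains (pl t) j}"

definition excess :: "nat \<Rightarrow> nat \<Rightarrow> (nat \<Rightarrow> nat) \<Rightarrow> (nat \<Rightarrow> nat list option) \<Rightarrow> real" where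
  "excess ell L nl pl = (real L + real (k_tilde L pl)) / 2 + 1 - real (r_tilde L nl)
      - real (c_tilde L pl) / real ell"

end

theory Submission
  imports Defs
begin

lemma fin_plab: "finite {j. plab_contains x j}"
proof (cases x)
  case None then show ?thesis by (simp add: plab_contains_def)
next
  case (Some xs)
  then have "{j. plab_contains x j} = set xs" by (auto simp: plab_contains_def)
  then show ?thesis by simp
qed

lemma aux_arith:
  fixes r f fe e n l fn nf q :: real
  assumes "r \<le> f + 1" "fe * 2 \<le> e" "e + n = l" "fn + nf = n" "f = fe + fn" "q \<le> nf"
  shows "r + q \<le> (l + n) / 2 + 1"
  using assms by argo

theorem lemma3p13:
  fixes p n ell L :: nat and nl :: "nat \<Rightarrow> nat" and pl :: "nat \<Rightarrow> nat list option"
  assumes "ell \<ge> 1" and "L \<ge> 2"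
    and "simple_labelling p n ell L nl pl"
  shows "excess ell L nl pl \<ge> 0"
proof -
  have lab: "\<forall>t<L. case pl t of None \<Rightarrow> True
              | Some xs \<Rightarrow> length xs = ell \<and> set xs \<subseteq> {1..p}"
    using assms(3) unfolding simple_labelling_def by blast
  have dist: "\<forall>t<L. case pl t of None \<Rightarrow> True | Some xs \<Rightarrow> distinct xs"
    using assms(3) unfolding simple_labelling_def by blast
  have par: "\<And>i j. even (card {t. t < L \<and> nl t = i \<and> plab_contains (pl t) j}
                 + card {t. t < L \<and> nl ((t + 1) mod L) = i \<and> plab_contains (pl t) j})"
    using assms(3) unfolding simple_labelling_def by blast
  have sym: "\<And>i i'. card {t. t < L \<and> nl t = i \<and> pl t = None \<and> nl ((t + 1) mod L) = i'}
           = card {t. t < L \<and> nl t = i' \<and> pl t = None \<and> nl ((t + 1) mod L) = i}"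
    using assms(3) unfolding simple_labelling_def by blast
  define F where "F = {t. t < L \<and> nl ((t+1) mod L) \<notin> nl ` {..t}}"
  define N where "N = {t. t < L \<and> pl t \<noteq> None}"
  define E where "E = {t. t < L \<and> pl t = None}"
  define C where "C = {j. \<exists>t<L. plab_contains (pl t) j}"
  have L1: "L \<ge> 1" using assms(2) by simp
  have finF: "finite F" unfolding F_def by simp
  have finN: "finite N" unfolding N_def by simp
  have finE: "finite E" unfolding E_def by simp
  have Fsuc: "Suc t < L" if "t \<in> F" for t
  proof (rule ccontr)
    assume "\<not> Suc t < L"
    with that have "Suc t = L" unfolding F_def by auto
    then have "(t+1) mod L = 0" by simp
    then show False using that unfolding F_def by auto
  qed
  have Fnew: "nl (Suc t) \<notin> nl ` {..t}" if "t \<in> F" for t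
    using that Fsuc[OF that] unfolding F_def by auto
  have r_le: "r_tilde L nl \<le> card F + 1"
  proof -
    have "nl ` {..<L} \<subseteq> insert (nl 0) ((\<lambda>t. nl (Suc t)) ` F)"
    proof
      fix x assume "x \<in> nl ` {..<L}"
      then obtain s where s: "s < L" "nl s = x" by auto
      define s0 where "s0 = (LEAST u. nl u = x)"
      have s0x: "nl s0 = x" unfolding s0_def by (rule LeastI[of _ s]) (use s in auto)
      have s0s: "s0 \<le> s" unfolding s0_def by (rule Least_le) (use s in auto)
      have min: "nl u \<noteq> x" if "u < s0" for u
        using not_less_Least[of u "\<lambda>u. nl u = x"] that unfolding s0_def by blast
      show "x \<in> insert (nl 0) ((\<lambda>t. nl (Suc t)) ` F)"
      proof (cases s0)
        case 0 then show ?thesis using s0x by simp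
      next
        case (Suc t)
        have "t \<in> F" unfolding F_def
        proof (intro CollectI conjI)
          show "t < L" using Suc s0s s by simp
          have "(t+1) mod L = s0" using Suc s0s s by simp
          then show "nl ((t+1) mod L) \<notin> nl ` {..t}"
          proof (clarsimp)
            fix u assume "u \<le> t" "nl ((Suc t) mod L) = nl u"
            then show False using min[of u] s0x Suc \<open>(t+1) mod L = s0\<close> by simp
          qed
        qed
        then show ?thesis using Suc s0x by auto
      qed
    qed
    then have "card (nl ` {..<L}) \<le> card (insert (nl 0) ((\<lambda>t. nl (Suc t)) ` F))"
      by (intro card_mono) (use finF in auto)
    also have "\<dots> \<le> Suc (card ((\<lambda>t. nl (Suc t)) ` F))" using finF by (simp add: card_insert_if)
    also have "\<dots> \<le> Suc (card F)" using card_image_le[OF finF] by simp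
    finally show ?thesis unfolding r_tilde_def by simp
  qed
  have a: "\<exists>t\<in>N-F. plab_contains (pl t) j" if "j \<in> C" for j
  proof (rule ccontr)
    assume nex: "\<not> (\<exists>t\<in>N-F. plab_contains (pl t) j)"
    define T where "T = {t. t < L \<and> plab_contains (pl t) j}"
    have finT: "finite T" unfolding T_def by simp
    have neT: "T \<noteq> {}" using that unfolding T_def C_def by auto
    have TN: "T \<subseteq> N" unfolding T_def N_def plab_contains_def by (auto split: option.splits)
    have TF: "T \<subseteq> F" using nex TN unfolding T_def by auto
    define t where "t = Max T"
    have tT: "t \<in> T" unfolding t_def using finT neT by simp
    have tmax: "s \<le> t" if "s \<in> T" for s unfolding t_def using finT that by simp
    define v where "v = nl (Suc t)"
    have tF: "t \<in> F" using tT TF by auto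
    have vnew: "v \<notin> nl ` {..t}" using Fnew[OF tF] unfolding v_def .
    have e1: "{s. s < L \<and> nl s = v \<and> plab_contains (pl s) j} = {}"
    proof -
      { fix s assume "s < L" "nl s = v" "plab_contains (pl s) j"
        then have "s \<in> T" unfolding T_def by simp
        then have "s \<le> t" by (rule tmax)
        then have False using vnew \<open>nl s = v\<close> by auto }
      then show ?thesis by blast
    qed
    have e2: "{s. s < L \<and> nl ((s + 1) mod L) = v \<and> plab_contains (pl s) j} = {t}"
    proof -
      { fix s assume s: "s < L" "nl ((s + 1) mod L) = v" "plab_contains (pl s) j"
        then have sT: "s \<in> T" unfolding T_def by simp
        then have "s \<le> t" by (rule tmax)
        have "Suc s < L" using Fsuc sT TF by auto
        then have "nl (Suc s) = v" using s by simp
        have "s = t"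
        proof (rule ccontr)
          assume "s \<noteq> t"
          then have "Suc s \<le> t" using \<open>s \<le> t\<close> by simp
          then show False using vnew \<open>nl (Suc s) = v\<close> by auto
        qed }
      moreover have "t < L" "nl ((t + 1) mod L) = v" "plab_contains (pl t) j"
        using tT Fsuc[OF tF] unfolding T_def v_def by auto
      ultimately show ?thesis by blast
    qed
    show False using par[of v j] unfolding e1 e2 by simp
  qed
  have c_le: "c_tilde L pl \<le> ell * card (N - F)"
  proof -
    have "C \<subseteq> (\<Union>t\<in>N-F. {j. plab_contains (pl t) j})" using a by blast
    then have "card C \<le> card (\<Union>t\<in>N-F. {j. plab_contains (pl t) j})"
      by (intro card_mono) (use finN fin_plab in auto)
    also have "\<dots> \<le> (\<Sum>t\<in>N-F. card {j. plab_contains (pl t) j})"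
      by (rule card_UN_le) (use finN in simp)
    also have "\<dots> = (\<Sum>t\<in>N-F. ell)"
    proof (rule sum.cong)
      fix t assume "t \<in> N - F"
      then obtain xs where xs: "pl t = Some xs" "t < L" unfolding N_def by auto
      have "length xs = ell" "distinct xs" using lab dist xs by force+
      moreover have "{j. plab_contains (pl t) j} = set xs" using xs by (auto simp: plab_contains_def)
      ultimately show "card {j. plab_contains (pl t) j} = ell" by (simp add: distinct_card)
    qed simp
    finally show ?thesis unfolding c_tilde_def C_def by (simp add: mult.commute)
  qed
  have b: "card (F \<inter> E) \<le> card (E - F)"
  proof -
    define g where "g t = (SOME t'. t' < L \<and> nl t' = nl (Suc t) \<and> pl t' = None \<and> nl ((t' + 1) mod L) = nl t)" for t
    have gprop: "g t < L \<and> nl (g t) = nl (Suc t) \<and> pl (g t) = None \<and> nl ((g t + 1) mod L) = nl t"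
      if "t \<in> F \<inter> E" for t
    proof -
      have tL: "Suc t < L" using Fsuc that by auto
      have "t \<in> {s. s < L \<and> nl s = nl t \<and> pl s = None \<and> nl ((s + 1) mod L) = nl (Suc t)}"
        using that tL unfolding E_def by auto
      then have "card {s. s < L \<and> nl s = nl t \<and> pl s = None \<and> nl ((s + 1) mod L) = nl (Suc t)} \<noteq> 0"
        by (simp add: card_eq_0_iff) blast
      then have "card {s. s < L \<and> nl s = nl (Suc t) \<and> pl s = None \<and> nl ((s + 1) mod L) = nl t} \<noteq> 0"
        unfolding sym[of "nl t" "nl (Suc t)"] .
      then have "{s. s < L \<and> nl s = nl (Suc t) \<and> pl s = None \<and> nl ((s + 1) mod L) = nl t} \<noteq> {}"
        by (metis card.empty)
      then have "\<exists>s. s < L \<and> nl s = nl (Suc t) \<and> pl s = None \<and> nl ((s + 1) mod L) = nl t"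
        by blast
      then show ?thesis unfolding g_def by (rule someI_ex)
    qed
    have sub: "g ` (F \<inter> E) \<subseteq> E - F"
    proof
      fix x assume "x \<in> g ` (F \<inter> E)"
      then obtain t where t: "t \<in> F \<inter> E" "x = g t" by auto
      note gp = gprop[OF t(1)]
      have "t < x"
      proof (rule ccontr)
        assume "\<not> t < x" then have "x \<le> t" by simp
        then have "nl x \<in> nl ` {..t}" by simp
        then show False using Fnew[of t] t gp by simp
      qed
      then have "x \<notin> F" using gp t unfolding F_def by auto
      then show "x \<in> E - F" using gp t unfolding E_def by auto
    qed
    have inj: "inj_on g (F \<inter> E)"
    proof
      fix t1 t2 assume t1: "t1 \<in> F \<inter> E" and t2: "t2 \<in> F \<inter> E" and eq: "g t1 = g t2"
      have v: "nl (Suc t1) = nl (Suc t2)" using gprop[OF t1] gprop[OF t2] eq by simp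
      show "t1 = t2"
      proof (rule ccontr)
        assume "t1 \<noteq> t2"
        then consider "t1 < t2" | "t2 < t1" by linarith
        then show False
        proof cases
          case 1
          then have "nl (Suc t1) \<in> nl ` {..t2}" by (intro imageI) simp
          then show ?thesis using Fnew[of t2] t2 v by simp
        next
          case 2
          then have "nl (Suc t2) \<in> nl ` {..t1}" by (intro imageI) simp
          then show ?thesis using Fnew[of t1] t1 v by simp
        qed
      qed
    qed
    have finED: "finite (E - F)" using finE by blast
    show ?thesis by (rule card_inj_on_le[OF inj sub finED])
  qed
  have k: "k_tilde L pl = card N" unfolding k_tilde_def N_def by simp
  have EN: "card E + card N = L"
  proof -
    have "E \<union> N = {..<L}" "E \<inter> N = {}" unfolding E_def N_def by auto
    then show ?thesis using card_Un_disjoint[OF finE finN] by simp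
  qed
  have s1: "card (F \<inter> E) + card (E - F) = card E"
    using card_Int_Diff[OF finE, of F] by (simp add: Int_commute)
  have s2: "card (F \<inter> N) + card (N - F) = card N"
    using card_Int_Diff[OF finN, of F] by (simp add: Int_commute)
  have s3: "card F = card (F \<inter> E) + card (F \<inter> N)"
  proof -
    have FL: "F \<subseteq> {..<L}" unfolding F_def by blast
    have "F = (F \<inter> E) \<union> (F \<inter> N)" using FL unfolding E_def N_def by blast
    moreover have "(F \<inter> E) \<inter> (F \<inter> N) = {}" unfolding E_def N_def by blast
    ultimately show ?thesis using card_Un_disjoint[of "F \<inter> E" "F \<inter> N"] finF by (metis finite_Int)
  qed
  have ellpos: "real ell > 0" using assms(1) by simp
  have cdiv: "real (c_tilde L pl) / real ell \<le> real (card (N - F))"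
  proof -
    have "real (c_tilde L pl) \<le> real ell * real (card (N - F))"
      using c_le by (simp only: of_nat_mult[symmetric] of_nat_le_iff)
    then show ?thesis using ellpos by (simp add: divide_simps mult.commute)
  qed
  have "real (r_tilde L nl) \<le> real (card F) + 1" using r_le by simp
  moreover have "real (card (F \<inter> E)) * 2 \<le> real (card E)" using b s1 by simp
  moreover have "real (card E) + real (card N) = real L" using EN by (simp only: of_nat_add[symmetric])
  moreover have "real (card (F \<inter> N)) + real (card (N - F)) = real (card N)" using s2 by (simp only: of_nat_add[symmetric])
  moreover have "real (card F) = real (card (F \<inter> E)) + real (card (F \<inter> N))" using s3 by simp
  ultimately have fin: "real (r_tilde L nl) + real (c_tilde L pl) / real ell \<le> (real L + real (card N)) / 2 + 1"
    using cdiv by (rule aux_arith)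
  show ?thesis unfolding excess_def k using fin by linarith
qed

end
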